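(* Let $E$ be a linear subspace of $\mathbb{R}^d$, $\|\cdot\|_c$ and $\|\cdot\|_s$ norms on $\mathbb{R}^d$ such that $x\mapsto\frac12\|x\|_s^2$ is $L$-smooth with respect to $\|\cdot\|_s$, $p_{c,E}(x)=\min_{y\in E}\|x-y\|_c$, $p_{s,E}(x)=\min_{y\in E}\|x-y\|_s$, $\theta>0$, and $$M_E(x)=\min_{y\in\mathbb{R}^d}\left\{\tfrac12p_{c,E}^2(y)+\tfrac1{2\theta}\|x-y\|_s^2\right\}.$$ Then: (1) $M_E$ is convex and $M_E(y)\le M_E(x)+\langle\nabla M_E(x),y-x\rangle+\frac{L}{2\theta}p_{s,E}^2(y-x)$ for all $x,y\in\mathbb{R}^d$. (2) If $\ell_{cs},u_{cs}>0$ satisfy $\ell_{cs}\|\cdot\|_s\le\|\cdot\|_c\le u_{cs}\|\cdot\|_s$, and $\ell_{cm}=\sqrt{1+\theta\ell_{cs}^2}$, $u_{cm}=\sqrt{1+\theta u_{cs}^2}$, then $\ell_{cm}^2M_E(x)\le\frac12p_{c,E}^2(x)\le u_{cm}^2M_E(x)$ for all $x\in\mathbb{R}^d$. (3) $\|\nabla M_E(x)-\nabla M_E(y)\|_{s,*}\le\frac{L}{\theta}p_{s,E}(x-y)$ for all $x,y\in\mathbb{R}^d$, where $\|\cdot\|_{s,*}$ is the dual norm of $\|\cdot\|_s$.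
   Context: A function $f$ is $L$-smooth with respect to a norm $\|\cdot\|$ if it is differentiable and $\|\nabla f(x)-\nabla f(y)\|_*\le L\|x-y\|$ for all $x,y$, where $\|\cdot\|_*$ is the dual norm. *)

theory Defs
  imports "HOL-Analysis.Analysis"
begin

definition is_norm :: "('a::real_vector \<Rightarrow> real) \<Rightarrow> bool" where
  "is_norm N \<longleftrightarrow> (\<forall>x. N x = 0 \<longleftrightarrow> x = 0) \<and> (\<forall>c x. N (c *\<^sub>R x) = \<bar>c\<bar> * N x)
     \<and> (\<forall>x y. N (x + y) \<le> N x + N y)"

definition dual_norm :: "('a::real_inner \<Rightarrow> real) \<Rightarrow> 'a \<Rightarrow> real" where
  "dual_norm N g = Sup {g \<bullet> x | x. N x \<le> 1}"

definition has_gradient_everywhere :: "('a::real_inner \<Rightarrow> real) \<Rightarrow> ('a \<Rightarrow> 'a) \<Rightarrow> bool" where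
  "has_gradient_everywhere f G \<longleftrightarrow> (\<forall>x. (f has_derivative (\<lambda>h. G x \<bullet> h)) (at x))"

definition L_smooth :: "('a::real_inner \<Rightarrow> real) \<Rightarrow> real \<Rightarrow> ('a \<Rightarrow> real) \<Rightarrow> bool" where
  "L_smooth N L f \<longleftrightarrow> (\<exists>G. has_gradient_everywhere f G \<and>
      (\<forall>x y. dual_norm N (G x - G y) \<le> L * N (x - y)))"

definition dist_to :: "('a::real_vector \<Rightarrow> real) \<Rightarrow> 'a set \<Rightarrow> 'a \<Rightarrow> real" where
  "dist_to N E x = Inf ((\<lambda>y. N (x - y)) ` E)"

definition moreau_env :: "('a::real_vector \<Rightarrow> real) \<Rightarrow> ('a \<Rightarrow> real) \<Rightarrow> 'a set \<Rightarrow> real \<Rightarrow> 'a \<Rightarrow> real" where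
  "moreau_env Nc Ns E \<theta> x =
     Inf (range (\<lambda>y. (1/2) * (dist_to Nc E y)\<^sup>2 + (1 / (2 * \<theta>)) * (Ns (x - y))\<^sup>2))"

end

theory Submission
  imports Defs
begin


lemma eps_le:
  fixes A B C :: real
  assumes "\<And>e. 0 < e \<Longrightarrow> e \<le> 1 \<Longrightarrow> A \<le> B + e * C"
  shows "A \<le> B"
proof (rule ccontr)
  assume "\<not> A \<le> B"
  hence ab: "A > B" by simp
  show False
  proof (cases "C \<le> 0")
    case True
    from assms[of 1] True ab show False by simp
  next
    case False
    define e where "e = min 1 ((A - B) / (2 * C))"
    have e0: "0 < e" using ab False by (simp add: e_def)
    have e1: "e \<le> 1" by (simp add: e_def)
    have "e * C \<le> (A - B) / (2 * C) * C"
      using False by (intro mult_right_mono) (auto simp: e_def)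
    also have "\<dots> = (A - B) / 2" using False by simp
    finally have "e * C \<le> (A - B) / 2" .
    with assms[OF e0 e1] ab show False by simp
  qed
qed

lemma sq_convex_ineq:
  fixes a b q t :: real
  assumes "0 \<le> q" "q \<le> (1 - t) * a + t * b" "0 \<le> t" "t \<le> 1"
  shows "q^2 \<le> (1 - t) * a^2 + t * b^2"
proof -
  have "q^2 \<le> ((1 - t) * a + t * b)^2"
    using assms by (intro power_mono) auto
  also have "\<dots> = (1 - t) * a^2 + t * b^2 - t * (1 - t) * (a - b)^2"
    by (simp add: power2_eq_square algebra_simps)
  also have "\<dots> \<le> (1 - t) * a^2 + t * b^2"
    using assms by (simp add: mult_nonneg_nonneg)
  finally show ?thesis .
qed

lemma sq_convex:
  fixes q :: "'a::real_vector \<Rightarrow> real"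
  assumes "convex_on UNIV q" "\<And>x. q x \<ge> 0" "c \<ge> 0"
  shows "convex_on UNIV (\<lambda>x. c * (q x)^2)"
proof (rule convex_onI)
  fix t :: real and x y :: 'a
  assume t: "0 < t" "t < 1"
  have "q ((1 - t) *\<^sub>R x + t *\<^sub>R y) \<le> (1 - t) * q x + t * q y"
    using assms(1) t by (auto simp: convex_on_def)
  hence "(q ((1 - t) *\<^sub>R x + t *\<^sub>R y))^2 \<le> (1 - t) * (q x)^2 + t * (q y)^2"
    using t assms(2) by (intro sq_convex_ineq) auto
  hence "c * (q ((1 - t) *\<^sub>R x + t *\<^sub>R y))^2 \<le> c * ((1 - t) * (q x)^2 + t * (q y)^2)"
    using assms(3) by (rule mult_left_mono)
  thus "c * (q ((1 - t) *\<^sub>R x + t *\<^sub>R y))^2 \<le> (1 - t) * (c * (q x)^2) + t * (c * (q y)^2)"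
    by (simp add: algebra_simps)
qed auto

context
  fixes N :: "'a::real_vector \<Rightarrow> real"
  assumes N: "is_norm N"
begin

lemma N_zero[simp]: "N 0 = 0"
  using N unfolding is_norm_def by blast

lemma N_eq0: "N x = 0 \<longleftrightarrow> x = 0"
  using N unfolding is_norm_def by blast

lemma N_scale: "N (c *\<^sub>R x) = \<bar>c\<bar> * N x"
  using N unfolding is_norm_def by blast

lemma N_tri: "N (x + y) \<le> N x + N y"
  using N unfolding is_norm_def by blast

lemma N_minus: "N (- x) = N x"
  using N_scale[of "-1" x] by simp

lemma N_commute: "N (x - y) = N (y - x)"
  using N_minus[of "x - y"] by simp

lemma N_nonneg: "N x \<ge> 0"
  using N_tri[of x "-x"] N_minus[of x] by simp

lemma N_tri_diff: "N (x - z) \<le> N (x - y) + N (y - z)"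
  using N_tri[of "x - y" "y - z"] by simp

lemma N_convex: "convex_on UNIV N"
proof (rule convex_onI)
  fix t :: real and x y :: 'a
  assume t: "0 < t" "t < 1"
  have "N ((1 - t) *\<^sub>R x + t *\<^sub>R y) \<le> N ((1 - t) *\<^sub>R x) + N (t *\<^sub>R y)" by (rule N_tri)
  also have "\<dots> = (1 - t) * N x + t * N y" using t by (simp add: N_scale)
  finally show "N ((1 - t) *\<^sub>R x + t *\<^sub>R y) \<le> (1 - t) * N x + t * N y" .
qed auto

end

context
  fixes N :: "'a::euclidean_space \<Rightarrow> real"
  assumes N: "is_norm N"
begin

lemma N_cont: "continuous_on UNIV N"
  by (rule convex_on_continuous) (auto simp: N_convex[OF N])

lemma N_equiv: "\<exists>c C. c > 0 \<and> C > 0 \<and> (\<forall>x. c * norm x \<le> N x \<and> N x \<le> C * norm x)"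
proof -
  obtain b :: 'a where b: "b \<in> Basis" using nonempty_Basis by blast
  have ne: "sphere (0::'a) 1 \<noteq> {}" using b by (auto intro!: exI[of _ b])
  have cs: "continuous_on (sphere 0 1) N" using N_cont continuous_on_subset by blast
  obtain x0 where x0: "x0 \<in> sphere 0 1" "\<forall>y\<in>sphere 0 1. N x0 \<le> N y"
    using continuous_attains_inf[OF compact_sphere ne cs] by blast
  obtain x1 where x1: "x1 \<in> sphere 0 1" "\<forall>y\<in>sphere 0 1. N y \<le> N x1"
    using continuous_attains_sup[OF compact_sphere ne cs] by blast
  have c0: "N x0 > 0" using x0(1) N_nonneg[OF N, of x0] N_eq0[OF N, of x0] by auto
  have C0: "N x1 > 0" using x1(1) N_nonneg[OF N, of x1] N_eq0[OF N, of x1] by auto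
  have "N x0 * norm x \<le> N x \<and> N x \<le> N x1 * norm x" for x
  proof (cases "x = 0")
    case True then show ?thesis by (simp add: N_zero[OF N])
  next
    case False
    define u where "u = (1 / norm x) *\<^sub>R x"
    have u: "u \<in> sphere 0 1" using False by (simp add: u_def)
    have xu: "x = norm x *\<^sub>R u" using False by (simp add: u_def)
    have Nx: "N x = norm x * N u" using N_scale[OF N, of "norm x" u] xu by simp
    have "N x0 \<le> N u" "N u \<le> N x1" using x0(2) x1(2) u by auto
    hence "N x0 * norm x \<le> N u * norm x" "N u * norm x \<le> N x1 * norm x"
      by (auto intro: mult_right_mono)
    thus ?thesis using Nx by (simp add: mult.commute)
  qed
  thus ?thesis using c0 C0 by blast
qed

lemma dual_bdd: "bdd_above {g \<bullet> x | x. N x \<le> 1}"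
proof -
  obtain c C where cC: "c > 0" "\<forall>x. c * norm x \<le> N x \<and> N x \<le> C * norm x"
    using N_equiv by blast
  have "g \<bullet> x \<le> norm g / c" if "N x \<le> 1" for x
  proof -
    have "c * norm x \<le> 1" using cC that by (meson order_trans)
    hence nx: "norm x \<le> 1 / c" using cC(1) by (simp add: field_simps)
    have "g \<bullet> x \<le> norm g * norm x" by (rule norm_cauchy_schwarz)
    also have "\<dots> \<le> norm g * (1 / c)" using nx by (intro mult_left_mono) auto
    finally show ?thesis by simp
  qed
  thus ?thesis unfolding bdd_above_def by blast
qed

lemma dual_upper: "N x \<le> 1 \<Longrightarrow> g \<bullet> x \<le> dual_norm N g"
  unfolding dual_norm_def by (rule cSup_upper) (use dual_bdd in auto)

lemma dual_nonneg: "dual_norm N g \<ge> 0"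
  using dual_upper[of 0 g] by (simp add: N_zero[OF N])

lemma dual_ineq: "g \<bullet> x \<le> dual_norm N g * N x"
proof (cases "x = 0")
  case True then show ?thesis by (simp add: N_zero[OF N])
next
  case False
  have pos: "N x > 0" using False N_eq0[OF N, of x] N_nonneg[OF N, of x] by auto
  have "N ((1 / N x) *\<^sub>R x) = 1" using pos by (simp add: N_scale[OF N])
  hence "g \<bullet> ((1 / N x) *\<^sub>R x) \<le> dual_norm N g" by (intro dual_upper) simp
  moreover have "g \<bullet> ((1 / N x) *\<^sub>R x) = (g \<bullet> x) / N x" by (simp add: inner_scaleR_right)
  ultimately have "(g \<bullet> x) / N x \<le> dual_norm N g" by simp
  thus ?thesis using pos by (simp add: field_simps)
qed

lemma dual_least: "(\<And>x. N x \<le> 1 \<Longrightarrow> g \<bullet> x \<le> B) \<Longrightarrow> dual_norm N g \<le> B"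
  unfolding dual_norm_def
proof (rule cSup_least)
  have "g \<bullet> 0 \<in> {g \<bullet> x |x. N x \<le> 1}" using N_zero[OF N] by fastforce
  thus "{g \<bullet> x |x. N x \<le> 1} \<noteq> {}" by blast
qed auto

end



context
  fixes N :: "'a::real_vector \<Rightarrow> real" and E :: "'a set"
  assumes N: "is_norm N" and E: "subspace E"
begin

lemma E0: "0 \<in> E" using E by (rule subspace_0)

lemma dist_bdd: "bdd_below ((\<lambda>y. N (x - y)) ` E)"
  using N_nonneg[OF N] by (auto simp: bdd_below_def)

lemma dist_le: "e \<in> E \<Longrightarrow> dist_to N E x \<le> N (x - e)"
  unfolding dist_to_def by (rule cInf_lower) (use dist_bdd in auto)

lemma dist_ge: "(\<And>e. e \<in> E \<Longrightarrow> B \<le> N (x - e)) \<Longrightarrow> B \<le> dist_to N E x"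
  unfolding dist_to_def by (rule cInf_greatest) (use E0 in auto)

lemma dist_nonneg: "0 \<le> dist_to N E x"
  by (rule dist_ge) (rule N_nonneg[OF N])

lemma dist_approx: "\<epsilon> > 0 \<Longrightarrow> \<exists>e\<in>E. N (x - e) < dist_to N E x + \<epsilon>"
proof (rule ccontr)
  assume "\<epsilon> > 0" "\<not> (\<exists>e\<in>E. N (x - e) < dist_to N E x + \<epsilon>)"
  hence "dist_to N E x + \<epsilon> \<le> dist_to N E x" by (intro dist_ge) auto
  with \<open>\<epsilon> > 0\<close> show False by simp
qed

lemma dist_shift_le: "e \<in> E \<Longrightarrow> dist_to N E (x + e) \<le> dist_to N E x"
proof (rule dist_ge)
  fix e' assume "e \<in> E" "e' \<in> E"
  hence "e' + e \<in> E" using E by (simp add: subspace_add)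
  hence "dist_to N E (x + e) \<le> N (x + e - (e' + e))" by (rule dist_le)
  thus "dist_to N E (x + e) \<le> N (x - e')" by (simp add: algebra_simps)
qed

lemma dist_shift: "e \<in> E \<Longrightarrow> dist_to N E (x + e) = dist_to N E x"
proof -
  assume e: "e \<in> E"
  hence "- e \<in> E" using E by (simp add: subspace_neg)
  hence "dist_to N E (x + e + - e) \<le> dist_to N E (x + e)" by (rule dist_shift_le)
  thus ?thesis using dist_shift_le[OF e, of x] by simp
qed

lemma dist_lip: "dist_to N E x \<le> dist_to N E y + N (x - y)"
proof -
  have "dist_to N E x - N (x - y) \<le> dist_to N E y"
  proof (rule dist_ge)
    fix e assume "e \<in> E"
    hence "dist_to N E x \<le> N (x - e)" by (rule dist_le)
    also have "\<dots> \<le> N (x - y) + N (y - e)" by (rule N_tri_diff[OF N])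
    finally show "dist_to N E x - N (x - y) \<le> N (y - e)" by simp
  qed
  thus ?thesis by simp
qed

lemma dist_convex: "convex_on UNIV (dist_to N E)"
proof (rule convex_onI)
  fix t :: real and x y :: 'a
  assume t: "0 < t" "t < 1"
  show "dist_to N E ((1 - t) *\<^sub>R x + t *\<^sub>R y) \<le> (1 - t) * dist_to N E x + t * dist_to N E y"
  proof (rule eps_le)
    fix \<epsilon> :: real assume \<epsilon>: "0 < \<epsilon>" "\<epsilon> \<le> 1"
    obtain e1 where e1: "e1 \<in> E" "N (x - e1) < dist_to N E x + \<epsilon>" using dist_approx \<epsilon> by blast
    obtain e2 where e2: "e2 \<in> E" "N (y - e2) < dist_to N E y + \<epsilon>" using dist_approx \<epsilon> by blast
    have ee: "(1 - t) *\<^sub>R e1 + t *\<^sub>R e2 \<in> E"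
      using E e1 e2 by (simp add: subspace_add subspace_scale)
    have "dist_to N E ((1 - t) *\<^sub>R x + t *\<^sub>R y)
        \<le> N ((1 - t) *\<^sub>R x + t *\<^sub>R y - ((1 - t) *\<^sub>R e1 + t *\<^sub>R e2))"
      by (rule dist_le[OF ee])
    also have "\<dots> = N ((1 - t) *\<^sub>R (x - e1) + t *\<^sub>R (y - e2))" by (simp add: algebra_simps)
    also have "\<dots> \<le> N ((1 - t) *\<^sub>R (x - e1)) + N (t *\<^sub>R (y - e2))" by (rule N_tri[OF N])
    also have "\<dots> = (1 - t) * N (x - e1) + t * N (y - e2)" using t by (simp add: N_scale[OF N])
    also have "\<dots> \<le> (1 - t) * (dist_to N E x + \<epsilon>) + t * (dist_to N E y + \<epsilon>)"
      using t e1 e2 by (intro add_mono mult_left_mono) auto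
    also have "\<dots> = (1 - t) * dist_to N E x + t * dist_to N E y + \<epsilon> * 1" by (simp add: algebra_simps)
    finally show "dist_to N E ((1 - t) *\<^sub>R x + t *\<^sub>R y) \<le> (1 - t) * dist_to N E x + t * dist_to N E y + \<epsilon> * 1" .
  qed
qed auto

end

lemma dist_cont:
  fixes N :: "'a::euclidean_space \<Rightarrow> real"
  assumes N: "is_norm N" and E: "subspace E"
  shows "continuous_on UNIV (dist_to N E)"
  by (rule convex_on_continuous) (auto simp: dist_convex[OF N E])



lemma descent:
  fixes h :: "'a::euclidean_space \<Rightarrow> real" and N :: "'a \<Rightarrow> real"
  assumes N: "is_norm N" and grad: "\<And>x. (h has_derivative (\<lambda>v. Gs x \<bullet> v)) (at x)"
    and lip: "\<And>x y. dual_norm N (Gs x - Gs y) \<le> L * N (x - y)"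
  shows "h b \<le> h a + Gs a \<bullet> (b - a) + L / 2 * (N (b - a))^2"
    and "h a + Gs a \<bullet> (b - a) - L / 2 * (N (b - a))^2 \<le> h b"
proof -
  define d where "d = b - a"
  have D: "((\<lambda>t. h (a + t *\<^sub>R d)) has_real_derivative (Gs (a + t *\<^sub>R d) \<bullet> d)) (at t)" for t
  proof -
    have "((\<lambda>t. h (a + t *\<^sub>R d)) has_derivative (\<lambda>s. Gs (a + t *\<^sub>R d) \<bullet> (s *\<^sub>R d))) (at t)"
      by (rule has_derivative_compose[OF _ grad]) (auto intro!: derivative_eq_intros)
    moreover have "(\<lambda>s. Gs (a + t *\<^sub>R d) \<bullet> (s *\<^sub>R d)) = (*) (Gs (a + t *\<^sub>R d) \<bullet> d)"
      by (auto simp: fun_eq_iff)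
    ultimately show ?thesis by (simp add: has_field_derivative_def)
  qed
  have Nd: "N (t *\<^sub>R d) = t * N d" "N (- (t *\<^sub>R d)) = t * N d" if "t \<ge> 0" for t
    using that by (auto simp: N_scale[OF N] N_minus[OF N])
  have up: "(Gs (a + t *\<^sub>R d) - Gs a) \<bullet> d \<le> L * t * (N d)^2" if "t \<ge> 0" for t
  proof -
    have "(Gs (a + t *\<^sub>R d) - Gs a) \<bullet> d \<le> dual_norm N (Gs (a + t *\<^sub>R d) - Gs a) * N d"
      by (rule dual_ineq[OF N])
    also have "\<dots> \<le> L * N (a + t *\<^sub>R d - a) * N d"
      by (rule mult_right_mono[OF lip N_nonneg[OF N]])
    finally show ?thesis using Nd[OF that] by (simp add: power2_eq_square mult.assoc)
  qed
  have lo: "(Gs a - Gs (a + t *\<^sub>R d)) \<bullet> d \<le> L * t * (N d)^2" if "t \<ge> 0" for t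
  proof -
    have "(Gs a - Gs (a + t *\<^sub>R d)) \<bullet> d \<le> dual_norm N (Gs a - Gs (a + t *\<^sub>R d)) * N d"
      by (rule dual_ineq[OF N])
    also have "\<dots> \<le> L * N (a - (a + t *\<^sub>R d)) * N d"
      by (rule mult_right_mono[OF lip N_nonneg[OF N]])
    finally show ?thesis using Nd[OF that] by (simp add: power2_eq_square mult.assoc)
  qed
  define \<psi>1 where "\<psi>1 t = - (h (a + t *\<^sub>R d) - t * (Gs a \<bullet> d) - L / 2 * t^2 * (N d)^2)" for t
  define \<psi>2 where "\<psi>2 t = h (a + t *\<^sub>R d) - t * (Gs a \<bullet> d) + L / 2 * t^2 * (N d)^2" for t
  have D1: "(\<psi>1 has_real_derivative (- (Gs (a + t *\<^sub>R d) \<bullet> d - Gs a \<bullet> d - L * t * (N d)^2))) (at t)" for t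
    unfolding \<psi>1_def by (auto intro!: derivative_eq_intros D)
  have D2: "(\<psi>2 has_real_derivative (Gs (a + t *\<^sub>R d) \<bullet> d - Gs a \<bullet> d + L * t * (N d)^2)) (at t)" for t
    unfolding \<psi>2_def by (auto intro!: derivative_eq_intros D)
  have "\<psi>1 0 \<le> \<psi>1 1"
  proof (rule DERIV_nonneg_imp_increasing_open[of 0 1])
    fix t :: real assume "0 < t" "t < 1"
    hence "0 \<le> - (Gs (a + t *\<^sub>R d) \<bullet> d - Gs a \<bullet> d - L * t * (N d)^2)"
      using up[of t] by (simp add: inner_diff_left)
    thus "\<exists>y. (\<psi>1 has_real_derivative y) (at t) \<and> 0 \<le> y"
      using D1[of t] by blast
  next
    show "continuous_on {0..1} \<psi>1"
      using D1 by (meson DERIV_isCont continuous_at_imp_continuous_on)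
  qed simp
  thus "h b \<le> h a + Gs a \<bullet> (b - a) + L / 2 * (N (b - a))^2"
    by (simp add: \<psi>1_def d_def)
  have "\<psi>2 0 \<le> \<psi>2 1"
  proof (rule DERIV_nonneg_imp_increasing_open[of 0 1])
    fix t :: real assume "0 < t" "t < 1"
    hence "0 \<le> Gs (a + t *\<^sub>R d) \<bullet> d - Gs a \<bullet> d + L * t * (N d)^2"
      using lo[of t] by (simp add: inner_diff_left)
    thus "\<exists>y. (\<psi>2 has_real_derivative y) (at t) \<and> 0 \<le> y"
      using D2[of t] by blast
  next
    show "continuous_on {0..1} \<psi>2"
      using D2 by (meson DERIV_isCont continuous_at_imp_continuous_on)
  qed simp
  thus "h a + Gs a \<bullet> (b - a) - L / 2 * (N (b - a))^2 \<le> h b"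
    by (simp add: \<psi>2_def d_def)
qed



lemma conv_sub:
  fixes \<phi> :: "'a::real_vector \<Rightarrow> real"
  assumes cv: "convex_on UNIV \<phi>"
    and h: "\<And>t. 0 < t \<Longrightarrow> t \<le> 1 \<Longrightarrow> t * c - t^2 * C \<le> \<phi> (a + t *\<^sub>R d) - \<phi> a"
  shows "c \<le> \<phi> (a + d) - \<phi> a"
proof (rule eps_le)
  fix t :: real assume t: "0 < t" "t \<le> 1"
  have "\<phi> ((1 - t) *\<^sub>R a + t *\<^sub>R (a + d)) \<le> (1 - t) * \<phi> a + t * \<phi> (a + d)"
    using t by (intro convex_onD[OF cv]) auto
  moreover have "(1 - t) *\<^sub>R a + t *\<^sub>R (a + d) = a + t *\<^sub>R d" by (simp add: algebra_simps)
  ultimately have "\<phi> (a + t *\<^sub>R d) - \<phi> a \<le> t * (\<phi> (a + d) - \<phi> a)" by (simp add: algebra_simps)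
  with h[OF t] have "t * c - t^2 * C \<le> t * (\<phi> (a + d) - \<phi> a)" by linarith
  hence "t * (c - t * C) \<le> t * (\<phi> (a + d) - \<phi> a)" by (simp add: power2_eq_square algebra_simps)
  hence "c - t * C \<le> \<phi> (a + d) - \<phi> a" using t by simp
  thus "c \<le> \<phi> (a + d) - \<phi> a + t * C" by simp
qed

locale msetup =
  fixes E :: "'a::euclidean_space set" and Nc Ns :: "'a \<Rightarrow> real" and L \<theta> :: real
    and Gs :: "'a \<Rightarrow> 'a"
  assumes sub: "subspace E" and nc: "is_norm Nc" and ns: "is_norm Ns"
    and grad: "\<And>x. ((\<lambda>x. (1/2) * (Ns x)^2) has_derivative (\<lambda>v. Gs x \<bullet> v)) (at x)"
    and lip: "\<And>x y. dual_norm Ns (Gs x - Gs y) \<le> L * Ns (x - y)"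
    and th: "\<theta> > 0"
begin

definition "f y = (1/2) * (dist_to Nc E y)^2"
definition "g w = (1 / (2 * \<theta>)) * (Ns w)^2"
definition "F x y = f y + g (x - y)"
definition "K = L / \<theta>"
abbreviation "M \<equiv> moreau_env Nc Ns E \<theta>"

lemma M_def': "M x = Inf (range (F x))"
  unfolding moreau_env_def F_def f_def g_def ..

lemma L_nonneg: "L \<ge> 0"
proof -
  obtain b :: 'a where b: "b \<in> Basis" using nonempty_Basis by blast
  hence "b \<noteq> 0" by auto
  hence pos: "Ns b > 0" using N_eq0[OF ns, of b] N_nonneg[OF ns, of b] by auto
  have "0 \<le> dual_norm Ns (Gs b - Gs 0)" by (rule dual_nonneg[OF ns])
  also have "\<dots> \<le> L * Ns b" using lip[of b 0] by simp
  finally show ?thesis using pos by (simp add: zero_le_mult_iff)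
qed

lemma K_nonneg: "K \<ge> 0" using L_nonneg th by (simp add: K_def)

lemma g_h: "g w = (1 / \<theta>) * ((1/2) * (Ns w)^2)" by (simp add: g_def)

lemma g_up: "g b \<le> g a + ((1/\<theta>) *\<^sub>R Gs a) \<bullet> (b - a) + K / 2 * (Ns (b - a))^2"
proof -
  have "(1/2) * (Ns b)^2 \<le> (1/2) * (Ns a)^2 + Gs a \<bullet> (b - a) + L / 2 * (Ns (b - a))^2"
    by (rule descent(1)[OF ns grad lip])
  hence "(1/\<theta>) * ((1/2) * (Ns b)^2) \<le> (1/\<theta>) * ((1/2) * (Ns a)^2 + Gs a \<bullet> (b - a) + L / 2 * (Ns (b - a))^2)"
    using th by (intro mult_left_mono) auto
  thus ?thesis by (simp add: g_h K_def algebra_simps)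
qed

lemma g_lo: "g a + ((1/\<theta>) *\<^sub>R Gs a) \<bullet> (b - a) - K / 2 * (Ns (b - a))^2 \<le> g b"
proof -
  have "(1/2) * (Ns a)^2 + Gs a \<bullet> (b - a) - L / 2 * (Ns (b - a))^2 \<le> (1/2) * (Ns b)^2"
    by (rule descent(2)[OF ns grad lip])
  hence "(1/\<theta>) * ((1/2) * (Ns a)^2 + Gs a \<bullet> (b - a) - L / 2 * (Ns (b - a))^2) \<le> (1/\<theta>) * ((1/2) * (Ns b)^2)"
    using th by (intro mult_left_mono) auto
  thus ?thesis by (simp add: g_h K_def algebra_simps)
qed

lemma g_convex: "convex_on UNIV g"
  unfolding g_def[abs_def] using th
  by (intro sq_convex N_convex[OF ns] N_nonneg[OF ns]) auto

lemma g_sub: "g a + ((1/\<theta>) *\<^sub>R Gs a) \<bullet> (b - a) \<le> g b"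
proof -
  let ?v = "(1/\<theta>) *\<^sub>R Gs a"
  have "?v \<bullet> (b - a) \<le> g (a + (b - a)) - g a"
  proof (rule conv_sub[OF g_convex, where C = "K / 2 * (Ns (b - a))^2"])
    fix t :: real assume t: "0 < t" "t \<le> 1"
    have "g a + ?v \<bullet> (a + t *\<^sub>R (b - a) - a) - K / 2 * (Ns (a + t *\<^sub>R (b - a) - a))^2 \<le> g (a + t *\<^sub>R (b - a))"
      by (rule g_lo)
    moreover have "Ns (a + t *\<^sub>R (b - a) - a) = t * Ns (b - a)" using t by (simp add: N_scale[OF ns])
    ultimately show "t * (?v \<bullet> (b - a)) - t^2 * (K / 2 * (Ns (b - a))^2) \<le> g (a + t *\<^sub>R (b - a)) - g a"
      by (simp add: power_mult_distrib algebra_simps)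
  qed
  thus ?thesis by simp
qed

lemma f_convex: "convex_on UNIV f"
  unfolding f_def[abs_def]
  by (intro sq_convex dist_convex[OF nc sub] dist_nonneg[OF nc sub]) auto

lemma f_nonneg: "f y \<ge> 0" by (simp add: f_def)
lemma g_nonneg: "g w \<ge> 0" using th by (simp add: g_def)
lemma F_nonneg: "F x y \<ge> 0" by (simp add: F_def f_nonneg g_nonneg)

lemma f_shift: "e \<in> E \<Longrightarrow> f (y + e) = f y"
  by (simp add: f_def dist_shift[OF nc sub])

lemma M_le: "M x \<le> F x y"
  unfolding M_def' by (rule cInf_lower) (auto simp: bdd_below_def intro: F_nonneg)

lemma f_cont: "continuous_on UNIV f"
  unfolding f_def[abs_def] by (intro continuous_intros dist_cont[OF nc sub])

lemma g_cont: "continuous_on UNIV g"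
  unfolding g_def[abs_def] by (intro continuous_intros N_cont[OF ns])

lemma F_cont: "continuous_on UNIV (F x)"
proof -
  have "continuous_on UNIV (\<lambda>y. g (x - y))"
    by (rule continuous_on_compose2[OF g_cont]) (auto intro: continuous_intros)
  thus ?thesis unfolding F_def[abs_def] by (intro continuous_intros f_cont)
qed

lemma minimizer: "\<exists>z. \<forall>y. F x z \<le> F x y"
proof -
  obtain c C where cC: "c > 0" "\<forall>x. c * norm x \<le> Ns x \<and> Ns x \<le> C * norm x"
    using N_equiv[OF ns] by blast
  define R where "R = (sqrt (2 * \<theta> * F x x) + 1) / c"
  have "sqrt (2 * \<theta> * F x x) \<ge> 0" using th F_nonneg[of x x] by simp
  hence "sqrt (2 * \<theta> * F x x) + 1 > 0" by linarith
  hence R0: "R > 0" using cC(1) unfolding R_def by (intro divide_pos_pos)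
  have ne: "cball x R \<noteq> {}" using R0 by auto
  obtain z where z: "z \<in> cball x R" "\<forall>y\<in>cball x R. F x z \<le> F x y"
    using continuous_attains_inf[OF compact_cball ne continuous_on_subset[OF F_cont]] by blast
  have "F x z \<le> F x y" for y
  proof (cases "y \<in> cball x R")
    case True thus ?thesis using z by blast
  next
    case False
    hence "norm (x - y) > R" by (simp add: dist_norm)
    hence "c * norm (x - y) > c * R" using cC(1) by simp
    also have "c * R = sqrt (2 * \<theta> * F x x) + 1" using cC(1) by (simp add: R_def)
    finally have "Ns (x - y) > sqrt (2 * \<theta> * F x x) + 1" using cC(2) by (meson less_le_trans)
    hence "Ns (x - y) > sqrt (2 * \<theta> * F x x)" by simp
    hence "(Ns (x - y))^2 > (sqrt (2 * \<theta> * F x x))^2"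
      using \<open>sqrt (2 * \<theta> * F x x) \<ge> 0\<close> by (intro power_strict_mono) auto
    also have "(sqrt (2 * \<theta> * F x x))^2 = 2 * \<theta> * F x x" using th F_nonneg by simp
    finally have "g (x - y) > F x x" using th by (simp add: g_def field_simps)
    hence "F x y > F x x" using f_nonneg by (simp add: F_def add_nonneg_pos add.commute add_strict_increasing2)
    moreover have "F x z \<le> F x x" using z R0 by auto
    ultimately show ?thesis by simp
  qed
  thus ?thesis by blast
qed

definition "zz x = (SOME z. \<forall>y. F x z \<le> F x y)"

lemma zz: "F x (zz x) \<le> F x y"
  using someI_ex[OF minimizer[of x]] unfolding zz_def by blast

lemma M_eq: "M x = F x (zz x)"
  unfolding M_def' by (rule cInf_eq_minimum) (auto intro: zz)

definition "G x = (1/\<theta>) *\<^sub>R Gs (x - zz x)"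

end



context msetup begin

lemma f_sub: "f (zz x) + G x \<bullet> d \<le> f (zz x + d)"
proof -
  let ?z = "zz x" and ?v = "G x"
  have "?v \<bullet> d \<le> f (?z + d) - f ?z"
  proof (rule conv_sub[OF f_convex, where C = "K / 2 * (Ns d)^2"])
    fix t :: real assume t: "0 < t" "t \<le> 1"
    have "F x ?z \<le> F x (?z + t *\<^sub>R d)" by (rule zz)
    hence 1: "f ?z + g (x - ?z) \<le> f (?z + t *\<^sub>R d) + g (x - (?z + t *\<^sub>R d))" by (simp add: F_def)
    have "g (x - (?z + t *\<^sub>R d)) \<le> g (x - ?z) + ((1/\<theta>) *\<^sub>R Gs (x - ?z)) \<bullet> (x - (?z + t *\<^sub>R d) - (x - ?z))
        + K / 2 * (Ns (x - (?z + t *\<^sub>R d) - (x - ?z)))^2" by (rule g_up)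
    moreover have "x - (?z + t *\<^sub>R d) - (x - ?z) = - (t *\<^sub>R d)" by simp
    moreover have "Ns (- (t *\<^sub>R d)) = t * Ns d" using t by (simp add: N_minus[OF ns] N_scale[OF ns])
    ultimately have 2: "g (x - (?z + t *\<^sub>R d)) \<le> g (x - ?z) - t * (?v \<bullet> d) + t^2 * (K / 2 * (Ns d)^2)"
      by (simp add: G_def power_mult_distrib algebra_simps inner_minus_right)
    from 1 2 show "t * (?v \<bullet> d) - t^2 * (K / 2 * (Ns d)^2) \<le> f (?z + t *\<^sub>R d) - f ?z" by linarith
  qed
  thus ?thesis by simp
qed

lemma M_sub: "M x + G x \<bullet> (y - x) \<le> M y"
proof -
  let ?z = "zz x" and ?z' = "zz y" and ?v = "G x"
  have 1: "f ?z + ?v \<bullet> (?z' - ?z) \<le> f ?z'" using f_sub[of x "?z' - ?z"] by simp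
  have 2: "g (x - ?z) + ?v \<bullet> ((y - ?z') - (x - ?z)) \<le> g (y - ?z')"
    using g_sub[of "x - ?z" "y - ?z'"] by (simp add: G_def)
  have "?v \<bullet> (?z' - ?z) + ?v \<bullet> ((y - ?z') - (x - ?z)) = ?v \<bullet> (y - x)"
    by (simp add: inner_diff_right)
  with 1 2 have "F x ?z + ?v \<bullet> (y - x) \<le> F y ?z'" by (simp add: F_def)
  thus ?thesis by (simp add: M_eq)
qed

lemma M_up: "M y \<le> M x + G x \<bullet> (y - x) + K / 2 * (Ns (y - x))^2"
proof -
  let ?z = "zz x"
  have "M y \<le> F y ?z" by (rule M_le)
  also have "\<dots> = f ?z + g (y - ?z)" by (simp add: F_def)
  also have "g (y - ?z) \<le> g (x - ?z) + ((1/\<theta>) *\<^sub>R Gs (x - ?z)) \<bullet> ((y - ?z) - (x - ?z))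
        + K / 2 * (Ns ((y - ?z) - (x - ?z)))^2" by (rule g_up)
  finally show ?thesis by (simp add: M_eq F_def G_def)
qed

lemma M_shift_le: "e \<in> E \<Longrightarrow> M x \<le> M (x + e)"
proof -
  assume e: "e \<in> E"
  let ?z = "zz (x + e)"
  have "- e \<in> E" using e sub by (simp add: subspace_neg)
  hence "f (?z + - e) = f ?z" by (rule f_shift)
  hence "F x (?z - e) = F (x + e) ?z" by (simp add: F_def algebra_simps)
  thus ?thesis using M_le[of x "?z - e"] M_eq[of "x + e"] by simp
qed

lemma M_shift: "e \<in> E \<Longrightarrow> M (x + e) = M x"
proof -
  assume e: "e \<in> E"
  have "- e \<in> E" using e sub by (simp add: subspace_neg)
  hence "M (x + e) \<le> M (x + e + - e)" by (rule M_shift_le)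
  thus ?thesis using M_shift_le[OF e, of x] by simp
qed

lemma G_orth: "e \<in> E \<Longrightarrow> G x \<bullet> e = 0"
proof -
  assume e: "e \<in> E"
  have me: "- e \<in> E" using e sub by (simp add: subspace_neg)
  have "M x + G x \<bullet> (x + e - x) \<le> M (x + e)" by (rule M_sub)
  hence 1: "G x \<bullet> e \<le> 0" using M_shift[OF e, of x] by simp
  have "M x + G x \<bullet> (x + - e - x) \<le> M (x + - e)" by (rule M_sub)
  hence 2: "- (G x \<bullet> e) \<le> 0" using M_shift[OF me, of x] by simp
  from 1 2 show ?thesis by simp
qed

lemma M_up_p: "M y \<le> M x + G x \<bullet> (y - x) + K / 2 * (dist_to Ns E (y - x))^2"
proof -
  let ?P = "dist_to Ns E (y - x)"
  have P0: "?P \<ge> 0" by (rule dist_nonneg[OF ns sub])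
  show ?thesis
  proof (rule eps_le[where C = "K / 2 * (2 * ?P + 1)"])
    fix \<epsilon> :: real assume \<epsilon>: "0 < \<epsilon>" "\<epsilon> \<le> 1"
    obtain e where e: "e \<in> E" "Ns (y - x - e) < ?P + \<epsilon>" using dist_approx[OF ns sub \<epsilon>(1)] by blast
    have me: "- e \<in> E" using e sub by (simp add: subspace_neg)
    have "M y = M (y + - e)" using M_shift[OF me, of y] by simp
    also have "\<dots> \<le> M x + G x \<bullet> (y + - e - x) + K / 2 * (Ns (y + - e - x))^2" by (rule M_up)
    also have "G x \<bullet> (y + - e - x) = G x \<bullet> (y - x)"
      using G_orth[OF e(1), of x] by (simp add: inner_diff_right inner_add_right)
    also have "y + - e - x = y - x - e" by simp
    also have "(Ns (y - x - e))^2 \<le> (?P + \<epsilon>)^2"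
      using e(2) N_nonneg[OF ns, of "y - x - e"] by (intro power_mono) auto
    hence "K / 2 * (Ns (y - x - e))^2 \<le> K / 2 * (?P + \<epsilon>)^2" using K_nonneg by (intro mult_left_mono) auto
    also have "(?P + \<epsilon>)^2 \<le> ?P^2 + \<epsilon> * (2 * ?P + 1)"
      using \<epsilon> P0 by (simp add: power2_eq_square algebra_simps mult_left_le_one_le)
    hence "K / 2 * (?P + \<epsilon>)^2 \<le> K / 2 * (?P^2 + \<epsilon> * (2 * ?P + 1))" using K_nonneg by (intro mult_left_mono) auto
    finally show "M y \<le> M x + G x \<bullet> (y - x) + K / 2 * ?P^2 + \<epsilon> * (K / 2 * (2 * ?P + 1))"
      by (simp add: algebra_simps)
  qed
qed

lemma M_deriv: "(M has_derivative (\<lambda>h. G x \<bullet> h)) (at x)"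
  unfolding has_derivative_at'
proof (intro conjI allI impI)
  show "bounded_linear (\<lambda>h. G x \<bullet> h)" by (rule bounded_linear_inner_right)
  fix e :: real assume e: "e > 0"
  obtain C where C: "\<forall>z. Ns z \<le> C * norm z" using N_equiv[OF ns] by blast
  define B where "B = K / 2 * C^2 + 1"
  have B: "B > 0" using K_nonneg by (simp add: B_def add_nonneg_pos)
  have "\<forall>x'. 0 < norm (x' - x) \<and> norm (x' - x) < e / B \<longrightarrow>
        norm (M x' - M x - G x \<bullet> (x' - x)) / norm (x' - x) < e"
  proof (intro allI impI)
    fix x' assume x': "0 < norm (x' - x) \<and> norm (x' - x) < e / B"
    let ?n = "norm (x' - x)"
    have lo: "0 \<le> M x' - M x - G x \<bullet> (x' - x)" using M_sub[of x x'] by simp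
    have "(Ns (x' - x))^2 \<le> (C * ?n)^2"
      using C N_nonneg[OF ns, of "x' - x"] by (intro power_mono) auto
    hence "K / 2 * (Ns (x' - x))^2 \<le> K / 2 * (C * ?n)^2" using K_nonneg by (intro mult_left_mono) auto
    also have "\<dots> \<le> B * ?n^2" by (simp add: B_def power_mult_distrib algebra_simps)
    finally have up: "M x' - M x - G x \<bullet> (x' - x) \<le> B * ?n^2" using M_up[of x' x] by simp
    have "norm (M x' - M x - G x \<bullet> (x' - x)) / ?n \<le> B * ?n^2 / ?n"
      using lo up x' by (intro divide_right_mono) auto
    also have "\<dots> = B * ?n" using x' by (simp add: power2_eq_square)
    also have "\<dots> < B * (e / B)" using x' B by (intro mult_strict_left_mono) auto
    also have "\<dots> = e" using B by simp
    finally show "norm (M x' - M x - G x \<bullet> (x' - x)) / ?n < e" .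
  qed
  thus "\<exists>d>0. \<forall>x'. 0 < norm (x' - x) \<and> norm (x' - x) < d \<longrightarrow>
        norm (M x' - M x - G x \<bullet> (x' - x)) / norm (x' - x) < e"
    using e B by (intro exI[of _ "e / B"]) auto
qed

lemma M_convex: "convex_on UNIV M"
proof (rule convex_onI)
  fix t :: real and x y :: 'a
  assume t: "0 < t" "t < 1"
  let ?z = "(1 - t) *\<^sub>R x + t *\<^sub>R y"
  have 1: "M ?z + G ?z \<bullet> (x - ?z) \<le> M x" by (rule M_sub)
  have 2: "M ?z + G ?z \<bullet> (y - ?z) \<le> M y" by (rule M_sub)
  have "(1 - t) * (M ?z + G ?z \<bullet> (x - ?z)) + t * (M ?z + G ?z \<bullet> (y - ?z)) \<le> (1 - t) * M x + t * M y"
    using 1 2 t by (intro add_mono mult_left_mono) auto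
  moreover have "(1 - t) * (G ?z \<bullet> (x - ?z)) + t * (G ?z \<bullet> (y - ?z)) = G ?z \<bullet> ((1 - t) *\<^sub>R (x - ?z) + t *\<^sub>R (y - ?z))"
    by (simp add: inner_add_right inner_scaleR_right)
  moreover have "(1 - t) *\<^sub>R (x - ?z) + t *\<^sub>R (y - ?z) = 0"
    by (simp add: algebra_simps)
  ultimately show "M ?z \<le> (1 - t) * M x + t * M y" by (simp add: algebra_simps)
qed auto

end



lemma alg_id:
  fixes q \<theta> n m :: real
  assumes "q > 0" "\<theta> > 0"
  shows "q * ((1/2) * (1/q)^2 * n^2 + (1 / (2 * \<theta>)) * (1 - 1/q)^2 * m^2)
        = (1/2) * (n^2 + (q - 1) * ((q - 1) * m^2) / \<theta>) / q"
proof -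
  have "1 - 1/q = (q - 1) / q" using assms by (simp add: field_simps)
  thus ?thesis using assms by (simp add: field_simps power2_eq_square)
qed

context msetup begin

lemma G_lip: "dual_norm Ns (G x - G y) \<le> K * dist_to Ns E (x - y)"
proof -
  define \<Delta> where "\<Delta> = G x - G y"
  define P where "P = dist_to Ns E (x - y)"
  define D where "D = dual_norm Ns \<Delta>"
  have P0: "P \<ge> 0" unfolding P_def by (rule dist_nonneg[OF ns sub])
  have D0: "D \<ge> 0" unfolding D_def by (rule dual_nonneg[OF ns])
  have orth: "\<Delta> \<bullet> e = 0" if "e \<in> E" for e
    using G_orth[OF that, of x] G_orth[OF that, of y] by (simp add: \<Delta>_def inner_diff_left)
  have key: "2 * s * (\<Delta> \<bullet> w) \<le> D * P + K * s^2" if w: "Ns w \<le> 1" and s: "s > 0" for w s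
  proof -
    have Nsw: "(Ns (s *\<^sub>R w))^2 \<le> 1 * s^2"
    proof -
      have "Ns (s *\<^sub>R w) = s * Ns w" using s by (simp add: N_scale[OF ns])
      also have "\<dots> \<le> s" using w s by (simp add: mult_left_le)
      finally show ?thesis using N_nonneg[OF ns, of "s *\<^sub>R w"] by (simp add: power_mono)
    qed
    have Nsw': "(Ns (- (s *\<^sub>R w)))^2 \<le> 1 * s^2" using Nsw by (simp add: N_minus[OF ns])
    have Ka: "K / 2 * (Ns (s *\<^sub>R w))^2 \<le> K / 2 * s^2" using Nsw K_nonneg by (simp add: mult_left_mono)
    have Kb: "K / 2 * (Ns (- (s *\<^sub>R w)))^2 \<le> K / 2 * s^2" using Nsw' K_nonneg by (simp add: mult_left_mono)
    have a1: "M x + G x \<bullet> (y + s *\<^sub>R w - x) \<le> M (y + s *\<^sub>R w)" by (rule M_sub)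
    have a2: "M (y + s *\<^sub>R w) \<le> M y + G y \<bullet> (y + s *\<^sub>R w - y) + K / 2 * (Ns (y + s *\<^sub>R w - y))^2" by (rule M_up)
    have b1: "M y + G y \<bullet> (x - s *\<^sub>R w - y) \<le> M (x - s *\<^sub>R w)" by (rule M_sub)
    have b2: "M (x - s *\<^sub>R w) \<le> M x + G x \<bullet> (x - s *\<^sub>R w - x) + K / 2 * (Ns (x - s *\<^sub>R w - x))^2" by (rule M_up)
    have "2 * s * (\<Delta> \<bullet> w) \<le> \<Delta> \<bullet> (x - y) + K * s^2"
      using a1 a2 b1 b2 Ka Kb
      by (simp add: \<Delta>_def inner_diff_right inner_add_right inner_diff_left algebra_simps)
    also have "\<Delta> \<bullet> (x - y) \<le> D * P"
    proof (rule eps_le[where C = D])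
      fix \<epsilon> :: real assume \<epsilon>: "0 < \<epsilon>" "\<epsilon> \<le> 1"
      obtain e where e: "e \<in> E" "Ns (x - y - e) < P + \<epsilon>"
        using dist_approx[OF ns sub \<epsilon>(1)] unfolding P_def by blast
      have "\<Delta> \<bullet> (x - y) = \<Delta> \<bullet> (x - y - e)" using orth[OF e(1)] by (simp add: inner_diff_right)
      also have "\<dots> \<le> D * Ns (x - y - e)" unfolding D_def by (rule dual_ineq[OF ns])
      also have "\<dots> \<le> D * (P + \<epsilon>)" using e(2) D0 by (intro mult_left_mono) auto
      finally show "\<Delta> \<bullet> (x - y) \<le> D * P + \<epsilon> * D" by (simp add: algebra_simps)
    qed
    finally show ?thesis by simp
  qed
  have key2: "2 * s * D \<le> D * P + K * s^2" if s: "s > 0" for s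
  proof -
    have "D \<le> (D * P + K * s^2) / (2 * s)"
      unfolding D_def
    proof (rule dual_least[OF ns])
      fix w assume "Ns w \<le> 1"
      from key[OF this s] s show "\<Delta> \<bullet> w \<le> (dual_norm Ns \<Delta> * P + K * s^2) / (2 * s)"
        by (simp add: D_def field_simps)
    qed
    thus ?thesis using s by (simp add: field_simps)
  qed
  have "D \<le> K * P"
  proof (cases "D = 0")
    case True thus ?thesis using K_nonneg P0 by simp
  next
    case False
    hence Dp: "D > 0" using D0 by simp
    show ?thesis
    proof (cases "K = 0")
      case True
      have "2 * (P + 1) * D \<le> D * P" using key2[of "P + 1"] P0 True by simp
      hence "(P + 2) * D \<le> 0" by (simp add: algebra_simps)
      moreover have "(P + 2) * D > 0" using P0 Dp by simp
      ultimately show ?thesis by simp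
    next
      case False
      hence Kp: "K > 0" using K_nonneg by simp
      have "2 * (D / K) * D \<le> D * P + K * (D / K)^2" using key2[of "D / K"] Kp Dp by simp
      hence "2 * D^2 / K \<le> D * P + D^2 / K" using Kp by (simp add: power2_eq_square)
      hence "D^2 / K \<le> D * P" by simp
      hence "D^2 \<le> K * (D * P)" using Kp by (simp add: field_simps)
      hence "D * D \<le> D * (K * P)" by (simp add: power2_eq_square algebra_simps)
      thus ?thesis using Dp by simp
    qed
  qed
  thus ?thesis by (simp add: D_def \<Delta>_def P_def)
qed

lemma lower_bound:
  assumes l: "l > 0" and hl: "\<And>x. l * Ns x \<le> Nc x"
  shows "(1 + \<theta> * l^2) * M x \<le> (1/2) * (dist_to Nc E x)^2"
proof -
  define c where "c = \<theta> * l^2"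
  have c: "c > 0" using th l by (simp add: c_def)
  define \<alpha> where "\<alpha> = 1 / (1 + c)"
  let ?p = "dist_to Nc E x"
  have p0: "?p \<ge> 0" by (rule dist_nonneg[OF nc sub])
  have main: "(1 + c) * M x \<le> (1/2) * (Nc (x - e))^2" if e: "e \<in> E" for e
  proof -
    define y where "y = e + \<alpha> *\<^sub>R (x - e)"
    define n where "n = Nc (x - e)"
    define m where "m = Ns (x - e)"
    have n0: "n \<ge> 0" "m \<ge> 0" using N_nonneg[OF nc] N_nonneg[OF ns] by (auto simp: n_def m_def)
    have lm: "l * m \<le> n" using hl by (simp add: n_def m_def)
    have a0: "0 < \<alpha>" "\<alpha> < 1" using c by (auto simp: \<alpha>_def)
    have "dist_to Nc E y \<le> Nc (y - e)" by (rule dist_le[OF nc sub e])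
    also have "\<dots> = \<alpha> * n" using a0 by (simp add: y_def n_def N_scale[OF nc])
    finally have "(dist_to Nc E y)^2 \<le> (\<alpha> * n)^2"
      using dist_nonneg[OF nc sub, of y] by (intro power_mono) auto
    hence fy: "f y \<le> (1/2) * \<alpha>^2 * n^2" by (simp add: f_def power_mult_distrib)
    have "x - y = (1 - \<alpha>) *\<^sub>R (x - e)" by (simp add: y_def algebra_simps)
    hence "Ns (x - y) = (1 - \<alpha>) * m" using a0 by (simp add: m_def N_scale[OF ns])
    hence gy: "g (x - y) = (1 / (2 * \<theta>)) * (1 - \<alpha>)^2 * m^2" by (simp add: g_def power_mult_distrib)
    have "(l * m)^2 \<le> n^2" using lm n0 l by (intro power_mono) auto
    hence lm2: "c * m^2 \<le> \<theta> * n^2" using th by (simp add: power_mult_distrib c_def)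
    have "M x \<le> F x y" by (rule M_le)
    also have "\<dots> \<le> (1/2) * \<alpha>^2 * n^2 + (1 / (2 * \<theta>)) * (1 - \<alpha>)^2 * m^2" using fy gy by (simp add: F_def)
    finally have 1: "(1 + c) * M x \<le> (1 + c) * ((1/2) * \<alpha>^2 * n^2 + (1 / (2 * \<theta>)) * (1 - \<alpha>)^2 * m^2)"
      using c by (intro mult_left_mono) auto
    have "(1 + c) * ((1/2) * \<alpha>^2 * n^2 + (1 / (2 * \<theta>)) * (1 - \<alpha>)^2 * m^2)
        = (1/2) * (n^2 + c * (c * m^2) / \<theta>) / (1 + c)"
      using alg_id[of "1 + c" \<theta> n m] c th by (simp add: \<alpha>_def)
    also have "\<dots> \<le> (1/2) * (n^2 + c * (\<theta> * n^2) / \<theta>) / (1 + c)"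
      using c th lm2 by (intro divide_right_mono mult_left_mono add_left_mono divide_right_mono mult_left_mono) auto
    also have "\<dots> = (1/2) * n^2" using c th by (simp add: field_simps)
    finally show ?thesis using 1 by (simp add: n_def)
  qed
  have "(1 + c) * M x \<le> (1/2) * ?p^2"
  proof (rule eps_le[where C = "(1/2) * (2 * ?p + 1)"])
    fix \<epsilon> :: real assume \<epsilon>: "0 < \<epsilon>" "\<epsilon> \<le> 1"
    obtain e where e: "e \<in> E" "Nc (x - e) < ?p + \<epsilon>" using dist_approx[OF nc sub \<epsilon>(1)] by blast
    have "(Nc (x - e))^2 \<le> (?p + \<epsilon>)^2"
      using e(2) N_nonneg[OF nc, of "x - e"] by (intro power_mono) auto
    also have "(?p + \<epsilon>)^2 \<le> ?p^2 + \<epsilon> * (2 * ?p + 1)"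
      using \<epsilon> p0 by (simp add: power2_eq_square algebra_simps mult_left_le_one_le)
    finally show "(1 + c) * M x \<le> (1/2) * ?p^2 + \<epsilon> * ((1/2) * (2 * ?p + 1))"
      using main[OF e(1)] by (simp add: algebra_simps)
  qed
  thus ?thesis by (simp add: c_def)
qed

lemma upper_bound:
  assumes u: "u > 0" and hu: "\<And>x. Nc x \<le> u * Ns x"
  shows "(1/2) * (dist_to Nc E x)^2 \<le> (1 + \<theta> * u^2) * M x"
proof -
  define c where "c = \<theta> * u^2"
  have c: "c > 0" using th u by (simp add: c_def)
  let ?z = "zz x"
  define a where "a = dist_to Nc E ?z"
  define b where "b = u * Ns (x - ?z)"
  have ab: "a \<ge> 0" "b \<ge> 0" using dist_nonneg[OF nc sub] N_nonneg[OF ns] u by (auto simp: a_def b_def)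
  have "dist_to Nc E x \<le> a + Nc (x - ?z)" unfolding a_def by (rule dist_lip[OF nc sub])
  also have "\<dots> \<le> a + b" using hu by (simp add: b_def)
  finally have "(dist_to Nc E x)^2 \<le> (a + b)^2"
    using dist_nonneg[OF nc sub, of x] by (intro power_mono) auto
  also have "(a + b)^2 \<le> (1 + c) * (a^2 + b^2 / c)"
  proof -
    have "(1 + c) * (a^2 + b^2 / c) - (a + b)^2 = (c * a - b)^2 / c"
      using c by (simp add: field_simps power2_eq_square)
    moreover have "(c * a - b)^2 / c \<ge> 0" using c by simp
    ultimately show ?thesis by linarith
  qed
  also have "a^2 + b^2 / c = 2 * M x"
    using u th by (simp add: M_eq F_def f_def g_def a_def b_def c_def power_mult_distrib field_simps)
  finally show ?thesis by (simp add: c_def algebra_simps)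
qed

end


theorem proposition2:
  fixes E :: "(real ^ 'd) set" and Nc Ns :: "real ^ 'd \<Rightarrow> real" and L \<theta> :: real
  assumes "subspace E"
    and "is_norm Nc" and "is_norm Ns"
    and "L_smooth Ns L (\<lambda>x. (1/2) * (Ns x)\<^sup>2)"
    and "\<theta> > 0"
  shows "convex_on UNIV (moreau_env Nc Ns E \<theta>)
    \<and> (\<exists>G. has_gradient_everywhere (moreau_env Nc Ns E \<theta>) G
         \<and> (\<forall>x y. moreau_env Nc Ns E \<theta> y
               \<le> moreau_env Nc Ns E \<theta> x + G x \<bullet> (y - x) + L / (2 * \<theta>) * (dist_to Ns E (y - x))\<^sup>2)
         \<and> (\<forall>x y. dual_norm Ns (G x - G y) \<le> L / \<theta> * dist_to Ns E (x - y)))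
    \<and> (\<forall>lcs ucs. lcs > 0 \<and> ucs > 0 \<and> (\<forall>x. lcs * Ns x \<le> Nc x \<and> Nc x \<le> ucs * Ns x) \<longrightarrow>
         (\<forall>x. (sqrt (1 + \<theta> * lcs\<^sup>2))\<^sup>2 * moreau_env Nc Ns E \<theta> x \<le> (1/2) * (dist_to Nc E x)\<^sup>2
            \<and> (1/2) * (dist_to Nc E x)\<^sup>2 \<le> (sqrt (1 + \<theta> * ucs\<^sup>2))\<^sup>2 * moreau_env Nc Ns E \<theta> x))"
proof -
  obtain Gs where gs: "has_gradient_everywhere (\<lambda>x. (1/2) * (Ns x)^2) Gs"
      "\<forall>x y. dual_norm Ns (Gs x - Gs y) \<le> L * Ns (x - y)"
    using assms(4) unfolding L_smooth_def by blast
  interpret m: msetup E Nc Ns L \<theta> Gs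
    using assms gs by unfold_locales (auto simp: has_gradient_everywhere_def)
  have c1: "convex_on UNIV (moreau_env Nc Ns E \<theta>)" by (rule m.M_convex)
  have c2: "has_gradient_everywhere (moreau_env Nc Ns E \<theta>) m.G
         \<and> (\<forall>x y. moreau_env Nc Ns E \<theta> y
               \<le> moreau_env Nc Ns E \<theta> x + m.G x \<bullet> (y - x) + L / (2 * \<theta>) * (dist_to Ns E (y - x))\<^sup>2)
         \<and> (\<forall>x y. dual_norm Ns (m.G x - m.G y) \<le> L / \<theta> * dist_to Ns E (x - y))"
  proof (intro conjI allI)
    show "has_gradient_everywhere (moreau_env Nc Ns E \<theta>) m.G"
      unfolding has_gradient_everywhere_def using m.M_deriv by blast
  next
    fix x y
    show "moreau_env Nc Ns E \<theta> y
               \<le> moreau_env Nc Ns E \<theta> x + m.G x \<bullet> (y - x) + L / (2 * \<theta>) * (dist_to Ns E (y - x))\<^sup>2"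
      using m.M_up_p[of y x] by (simp add: m.K_def)
  next
    fix x y
    show "dual_norm Ns (m.G x - m.G y) \<le> L / \<theta> * dist_to Ns E (x - y)"
      using m.G_lip[of x y] by (simp add: m.K_def)
  qed
  have c3: "\<forall>lcs ucs. lcs > 0 \<and> ucs > 0 \<and> (\<forall>x. lcs * Ns x \<le> Nc x \<and> Nc x \<le> ucs * Ns x) \<longrightarrow>
         (\<forall>x. (sqrt (1 + \<theta> * lcs\<^sup>2))\<^sup>2 * moreau_env Nc Ns E \<theta> x \<le> (1/2) * (dist_to Nc E x)\<^sup>2
            \<and> (1/2) * (dist_to Nc E x)\<^sup>2 \<le> (sqrt (1 + \<theta> * ucs\<^sup>2))\<^sup>2 * moreau_env Nc Ns E \<theta> x)"
  proof (intro allI impI conjI)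
    fix lcs ucs x
    assume h: "lcs > 0 \<and> ucs > 0 \<and> (\<forall>x. lcs * Ns x \<le> Nc x \<and> Nc x \<le> ucs * Ns x)"
    have s1: "(sqrt (1 + \<theta> * lcs\<^sup>2))\<^sup>2 = 1 + \<theta> * lcs\<^sup>2" using assms(5) by simp
    have s2: "(sqrt (1 + \<theta> * ucs\<^sup>2))\<^sup>2 = 1 + \<theta> * ucs\<^sup>2" using assms(5) by simp
    show "(sqrt (1 + \<theta> * lcs\<^sup>2))\<^sup>2 * moreau_env Nc Ns E \<theta> x \<le> (1/2) * (dist_to Nc E x)\<^sup>2"
      unfolding s1 using h by (intro m.lower_bound) auto
    show "(1/2) * (dist_to Nc E x)\<^sup>2 \<le> (sqrt (1 + \<theta> * ucs\<^sup>2))\<^sup>2 * moreau_env Nc Ns E \<theta> x"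
      unfolding s2 using h by (intro m.upper_bound) auto
  qed
  show ?thesis using c1 c2 c3 by blast
qed

end
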